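(* For every $r>1$, every $\lambda\in(0,1)$, every measurable function $f$ on $\mathbb{R}^n$ and every $x\in\mathbb{R}^n$, $$Mf(x)\le \frac{r}{r-1}\lambda^{\frac{r-1}{r}}M_rf(x)+m_\lambda f(x).$$
   Context: $Mf(x)=\sup_{Q\ni x}\frac1{|Q|}\int_Q|f|$ is the Hardy–Littlewood maximal operator, with the supremum over cubes $Q$ containing $x$. For $r>0$, $M_rf:=M(|f|^r)^{1/r}$. For $\lambda\in(0,1)$, the local maximal operator is $$m_\lambda f(x)=\sup_{Q\ni x}(f\chi_Q)^*(\lambda|Q|),$$ where $$(f\chi_Q)^*(\lambda|Q|)=\inf\{\alpha>0:|\{y\in Q:|f(y)|>\alpha\}|\le\lambda|Q|\}$$ is the non-increasing rearrangement of $f\chi_Q$ evaluated at $\lambda|Q|$. *)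

theory Defs
  imports "HOL-Analysis.Analysis"
begin

definition is_cube :: "(real ^ 'n) set \<Rightarrow> bool" where
  "is_cube Q \<longleftrightarrow> (\<exists>a h. h > 0 \<and> Q = cbox a (a + h *\<^sub>R One))"

definition HL_max :: "(real ^ 'n \<Rightarrow> real) \<Rightarrow> real ^ 'n \<Rightarrow> ennreal" where
  "HL_max f x = (SUP Q \<in> {Q. is_cube Q \<and> x \<in> Q}.
      ennreal (1 / measure lebesgue Q) * (\<integral>\<^sup>+ y \<in> Q. ennreal \<bar>f y\<bar> \<partial>lebesgue))"

definition ennpow :: "ennreal \<Rightarrow> real \<Rightarrow> ennreal" where
  "ennpow a p = (if a = \<infinity> then \<infinity> else ennreal (enn2real a powr p))"

definition HL_max_r :: "real \<Rightarrow> (real ^ 'n \<Rightarrow> real) \<Rightarrow> real ^ 'n \<Rightarrow> ennreal" where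
  "HL_max_r r f x = ennpow (HL_max (\<lambda>y. \<bar>f y\<bar> powr r) x) (1 / r)"

text \<open>Non-increasing rearrangement of f restricted to Q, evaluated at t (inf of empty set = \<infinity>).\<close>
definition rearr_loc :: "(real ^ 'n \<Rightarrow> real) \<Rightarrow> (real ^ 'n) set \<Rightarrow> real \<Rightarrow> ennreal" where
  "rearr_loc f Q t = Inf {ennreal \<alpha> | \<alpha>. \<alpha> > 0 \<and>
      emeasure lebesgue {y \<in> Q. \<bar>f y\<bar> > \<alpha>} \<le> ennreal t}"

definition loc_max :: "real \<Rightarrow> (real ^ 'n \<Rightarrow> real) \<Rightarrow> real ^ 'n \<Rightarrow> ennreal" where
  "loc_max lam f x = (SUP Q \<in> {Q. is_cube Q \<and> x \<in> Q}. rearr_loc f Q (lam * measure lebesgue Q))"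

end

theory Submission
  imports Defs
begin

lemma young_pt:
  fixes a s r :: real
  assumes "a \<ge> 0" "s > 0" "r > 1"
  shows "a \<le> a powr r / (r * s powr (r - 1)) + s * (r - 1) / r"
proof -
  have "a / s * 1 \<le> (a / s) powr r / r + 1 powr (r / (r - 1)) / (r / (r - 1))"
    by (rule Youngs_inequality) (use assms in \<open>auto simp: field_simps\<close>)
  also have "\<dots> = a powr r / (r * s powr r) + (r - 1) / r"
    using assms by (simp add: powr_divide)
  finally have "a / s \<le> a powr r / (r * s powr r) + (r - 1) / r" by simp
  hence "s * (a / s) \<le> s * (a powr r / (r * s powr r) + (r - 1) / r)"
    using assms by (intro mult_left_mono) auto
  also have "\<dots> = a powr r / (r * s powr (r - 1)) + s * (r - 1) / r"
    using assms by (simp add: powr_diff field_simps)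
  finally show ?thesis using assms by simp
qed

lemma calc_eq:
  fixes b m lam r :: real
  assumes "b > 0" "m > 0" "lam > 0" "r > 1"
  defines "s \<equiv> (b / (lam * m)) powr (1 / r)"
  shows "b / (r * s powr (r - 1)) + s * (r - 1) / r * (lam * m)
         = lam powr ((r - 1) / r) * (b / m) powr (1 / r) * m"
proof -
  have s0: "s > 0" unfolding s_def using assms by simp
  have sr: "s powr r = b / (lam * m)" unfolding s_def using assms by (simp add: powr_powr)
  have sr1: "s powr (r - 1) = b / (lam * m) / s" using s0 sr by (simp add: powr_diff)
  have "b / (r * s powr (r - 1)) = lam * m * s / r" using sr1 s0 assms by (simp add: field_simps)
  hence L: "b / (r * s powr (r - 1)) + s * (r - 1) / r * (lam * m) = lam * m * s"
    using assms by (simp add: field_simps)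
  have "s = (b / m) powr (1 / r) / lam powr (1 / r)"
    unfolding s_def using assms by (simp add: powr_divide powr_mult field_simps)
  moreover have "lam powr ((r - 1) / r) = lam / lam powr (1 / r)"
    using assms by (simp add: powr_diff diff_divide_distrib)
  ultimately show ?thesis using L by (simp add: field_simps)
qed

lemma int_bound:
  fixes f :: "'a::euclidean_space \<Rightarrow> real"
  assumes fm: "f \<in> borel_measurable lebesgue" and Q: "Q \<in> sets lebesgue"
    and eQ: "emeasure lebesgue Q = ennreal m" and m: "m > 0"
    and r: "r > 1" and lam: "lam > 0"
    and B: "(\<integral>\<^sup>+ y \<in> Q. ennreal \<bar>\<bar>f y\<bar> powr r\<bar> \<partial>lebesgue) = ennreal b" and b: "b > 0"
    and al: "\<alpha> > 0" and Ebd: "emeasure lebesgue {y \<in> Q. \<bar>f y\<bar> > \<alpha>} \<le> ennreal (lam * m)"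
  shows "(\<integral>\<^sup>+ y \<in> Q. ennreal \<bar>f y\<bar> \<partial>lebesgue)
          \<le> ennreal (\<alpha> * m + lam powr ((r - 1) / r) * (b / m) powr (1 / r) * m)"
proof -
  define s where "s = (b / (lam * m)) powr (1 / r)"
  have s0: "s > 0" unfolding s_def using b m lam by simp
  define c1 where "c1 = 1 / (r * s powr (r - 1))"
  define c2 where "c2 = s * (r - 1) / r"
  have c1: "c1 \<ge> 0" unfolding c1_def using r s0 by simp
  have c2: "c2 \<ge> 0" unfolding c2_def using r s0 by simp
  define E where "E = {y \<in> Q. \<bar>f y\<bar> > \<alpha>}"
  have Em: "E \<in> sets lebesgue"
  proof -
    have "{y \<in> space lebesgue. \<alpha> < \<bar>f y\<bar>} \<in> sets lebesgue" using fm by measurable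
    hence "Q \<inter> {y \<in> space lebesgue. \<alpha> < \<bar>f y\<bar>} \<in> sets lebesgue" using Q by blast
    moreover have "E = Q \<inter> {y \<in> space lebesgue. \<alpha> < \<bar>f y\<bar>}" unfolding E_def by auto
    ultimately show ?thesis by simp
  qed
  have "(\<integral>\<^sup>+ y \<in> Q. ennreal \<bar>f y\<bar> \<partial>lebesgue)
     \<le> (\<integral>\<^sup>+ y. ennreal \<alpha> * indicator Q y + ennreal c1 * (ennreal \<bar>\<bar>f y\<bar> powr r\<bar> * indicator Q y)
            + ennreal c2 * indicator E y \<partial>lebesgue)"
  proof (rule nn_integral_mono)
    fix y :: 'a assume "y \<in> space lebesgue"
    show "ennreal \<bar>f y\<bar> * indicator Q y \<le> ennreal \<alpha> * indicator Q y
       + ennreal c1 * (ennreal \<bar>\<bar>f y\<bar> powr r\<bar> * indicator Q y) + ennreal c2 * indicator E y"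
    proof (cases "y \<in> Q")
      case False thus ?thesis by simp
    next
      case True
      show ?thesis
      proof (cases "\<bar>f y\<bar> \<le> \<alpha>")
        case True2: True
        have "ennreal \<bar>f y\<bar> \<le> ennreal \<alpha>" using True2 by (rule ennreal_leI)
        thus ?thesis using True by (simp add: add.assoc add_increasing2)
      next
        case False2: False
        hence yE: "y \<in> E" unfolding E_def using True by auto
        have "\<bar>f y\<bar> \<le> \<bar>f y\<bar> powr r / (r * s powr (r - 1)) + s * (r - 1) / r"
          by (rule young_pt) (use s0 r in auto)
        also have "\<dots> = c1 * \<bar>\<bar>f y\<bar> powr r\<bar> + c2" unfolding c1_def c2_def by simp
        finally have "ennreal \<bar>f y\<bar> \<le> ennreal (c1 * \<bar>\<bar>f y\<bar> powr r\<bar> + c2)" by (rule ennreal_leI)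
        also have "\<dots> = ennreal c1 * ennreal \<bar>\<bar>f y\<bar> powr r\<bar> + ennreal c2"
          using c1 c2 by (simp add: ennreal_plus ennreal_mult)
        finally have h: "ennreal \<bar>f y\<bar> \<le> ennreal c1 * ennreal \<bar>\<bar>f y\<bar> powr r\<bar> + ennreal c2" .
        show ?thesis using True yE add_increasing[OF zero_le[of "ennreal \<alpha>"] h] by (simp add: add.assoc)
      qed
    qed
  qed
  also have "\<dots> = ennreal \<alpha> * emeasure lebesgue Q + ennreal c1 * ennreal b + ennreal c2 * emeasure lebesgue E"
  proof -
    have m1: "(\<lambda>y. ennreal \<alpha> * indicator Q y) \<in> borel_measurable lebesgue" using Q by measurable
    have m2: "(\<lambda>y. ennreal c1 * (ennreal \<bar>\<bar>f y\<bar> powr r\<bar> * indicator Q y)) \<in> borel_measurable lebesgue"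
      using Q fm by measurable
    have m3: "(\<lambda>y. ennreal c2 * indicator E y) \<in> borel_measurable lebesgue" using Em by measurable
    have "(\<integral>\<^sup>+ y. ennreal \<alpha> * indicator Q y + ennreal c1 * (ennreal \<bar>\<bar>f y\<bar> powr r\<bar> * indicator Q y)
            + ennreal c2 * indicator E y \<partial>lebesgue)
        = (\<integral>\<^sup>+ y. ennreal \<alpha> * indicator Q y \<partial>lebesgue)
          + (\<integral>\<^sup>+ y. ennreal c1 * (ennreal \<bar>\<bar>f y\<bar> powr r\<bar> * indicator Q y) \<partial>lebesgue)
          + (\<integral>\<^sup>+ y. ennreal c2 * indicator E y \<partial>lebesgue)"
      using m1 m2 m3 by (simp add: nn_integral_add)
    also have "\<dots> = ennreal \<alpha> * emeasure lebesgue Q + ennreal c1 * ennreal b + ennreal c2 * emeasure lebesgue E"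
      using Q Em fm B by (simp add: nn_integral_cmult nn_integral_indicator)
    finally show ?thesis .
  qed
  also have "\<dots> \<le> ennreal \<alpha> * ennreal m + ennreal c1 * ennreal b + ennreal c2 * ennreal (lam * m)"
    using Ebd eQ unfolding E_def by (intro add_mono mult_left_mono) auto
  also have "\<dots> = ennreal (\<alpha> * m + c1 * b + c2 * (lam * m))"
    using al m c1 c2 b lam by (simp add: ennreal_plus ennreal_mult)
  also have "\<alpha> * m + c1 * b + c2 * (lam * m) = \<alpha> * m + lam powr ((r - 1) / r) * (b / m) powr (1 / r) * m"
    using calc_eq[OF b m lam r] unfolding c1_def c2_def s_def by simp
  finally show ?thesis .
qed


lemma ennpow_mono:
  assumes "a \<le> b" "p \<ge> 0"
  shows "ennpow a p \<le> ennpow b p"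
proof (cases "b = \<infinity>")
  case True thus ?thesis by (simp add: ennpow_def)
next
  case False
  hence "a \<noteq> \<infinity>" using assms by (auto simp: top_unique)
  moreover have "enn2real a \<le> enn2real b" using assms False by (simp add: enn2real_mono top.not_eq_extremum)
  ultimately show ?thesis using False assms
    by (simp add: ennpow_def ennreal_leI powr_mono2)
qed

lemma cube_bound:
  fixes f :: "real ^ 'n \<Rightarrow> real"
  assumes fm: "f \<in> borel_measurable lebesgue" and Q: "Q \<in> sets lebesgue"
    and eQ: "emeasure lebesgue Q = ennreal m" and m: "m > 0"
    and r: "r > 1" and lam: "lam > 0" "lam < 1"
  shows "ennreal (1 / m) * (\<integral>\<^sup>+ y \<in> Q. ennreal \<bar>f y\<bar> \<partial>lebesgue)
    \<le> ennreal (r / (r - 1) * lam powr ((r - 1) / r))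
        * ennpow (ennreal (1 / m) * (\<integral>\<^sup>+ y \<in> Q. ennreal \<bar>\<bar>f y\<bar> powr r\<bar> \<partial>lebesgue)) (1 / r)
      + rearr_loc f Q (lam * m)"
proof -
  define I where "I = (\<integral>\<^sup>+ y \<in> Q. ennreal \<bar>\<bar>f y\<bar> powr r\<bar> \<partial>lebesgue)"
  define C where "C = r / (r - 1) * lam powr ((r - 1) / r)"
  have C0: "C > 0" unfolding C_def using r lam by simp
  consider (inf) "I = \<infinity>" | (zero) "I = 0" | (fin) b where "I = ennreal b" "b > 0"
    by (cases I rule: ennreal_cases) (auto simp: le_less)
  then show ?thesis
  proof cases
    case inf
    have "ennreal (1 / m) * I = \<infinity>" using inf m by (simp add: ennreal_mult_eq_top_iff)
    hence "ennreal C * ennpow (ennreal (1 / m) * I) (1 / r) = \<infinity>"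
      using C0 by (simp add: ennpow_def ennreal_mult_eq_top_iff)
    thus ?thesis unfolding I_def C_def by simp
  next
    case zero
    have "AE y in lebesgue. ennreal \<bar>\<bar>f y\<bar> powr r\<bar> * indicator Q y = 0"
    proof -
      have mI: "(\<lambda>y. ennreal \<bar>\<bar>f y\<bar> powr r\<bar> * indicator Q y) \<in> borel_measurable lebesgue"
        using fm Q by measurable
      show ?thesis using zero nn_integral_0_iff_AE[OF mI] unfolding I_def by simp
    qed
    hence "AE y in lebesgue. ennreal \<bar>f y\<bar> * indicator Q y = 0"
      by (rule AE_mp) (auto intro!: AE_I2 simp: indicator_def split: if_splits)
    hence "(\<integral>\<^sup>+ y \<in> Q. ennreal \<bar>f y\<bar> \<partial>lebesgue) = 0"
    proof -
      have mI: "(\<lambda>y. ennreal \<bar>f y\<bar> * indicator Q y) \<in> borel_measurable lebesgue"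
        using fm Q by measurable
      show ?thesis using nn_integral_0_iff_AE[OF mI] \<open>AE y in lebesgue. ennreal \<bar>f y\<bar> * indicator Q y = 0\<close> by simp
    qed
    thus ?thesis by simp
  next
    case fin
    define K where "K = lam powr ((r - 1) / r) * (b / m) powr (1 / r)"
    have K0: "K \<ge> 0" unfolding K_def by simp
    define S where "S = {ennreal \<alpha> | \<alpha>. \<alpha> > 0 \<and>
      emeasure lebesgue {y \<in> Q. \<bar>f y\<bar> > \<alpha>} \<le> ennreal (lam * m)}"
    have each: "ennreal (1 / m) * (\<integral>\<^sup>+ y \<in> Q. ennreal \<bar>f y\<bar> \<partial>lebesgue) \<le> a + ennreal K"
      if aS: "a \<in> S" for a
    proof -
      obtain \<alpha> where a: "a = ennreal \<alpha>" "\<alpha> > 0"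
        "emeasure lebesgue {y \<in> Q. \<bar>f y\<bar> > \<alpha>} \<le> ennreal (lam * m)"
        using aS unfolding S_def by auto
      have "(\<integral>\<^sup>+ y \<in> Q. ennreal \<bar>f y\<bar> \<partial>lebesgue) \<le> ennreal (\<alpha> * m + K * m)"
        using int_bound[OF fm Q eQ m r lam(1) _ fin(2) a(2) a(3)] fin(1)
        unfolding I_def K_def by simp
      hence "ennreal (1 / m) * (\<integral>\<^sup>+ y \<in> Q. ennreal \<bar>f y\<bar> \<partial>lebesgue)
          \<le> ennreal (1 / m) * ennreal (\<alpha> * m + K * m)" by (rule mult_left_mono) simp
      also have "\<dots> = ennreal (\<alpha> + K)"
        using m a K0 by (simp add: ennreal_mult''[symmetric] field_simps)
      also have "\<dots> = a + ennreal K" using a K0 by (simp add: ennreal_plus)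
      finally show ?thesis .
    qed
    have inf_bd: "ennreal (1 / m) * (\<integral>\<^sup>+ y \<in> Q. ennreal \<bar>f y\<bar> \<partial>lebesgue) \<le> Inf S + ennreal K"
    proof (cases "S = {}")
      case True thus ?thesis by simp
    next
      case False
      have cont: "continuous (at_right (Inf S)) (\<lambda>x::ennreal. x + ennreal K)"
        by (intro continuous_intros)
      have "Inf S + ennreal K = (INF s\<in>S. s + ennreal K)"
        by (rule continuous_at_Inf_mono[OF _ cont False]) (auto simp: mono_def add_right_mono)
      thus ?thesis using each by (simp add: le_INF_iff)
    qed
    have "ennpow (ennreal (1 / m) * I) (1 / r) = ennreal ((b / m) powr (1 / r))"
      using fin m by (simp add: ennpow_def ennreal_mult''[symmetric])
    hence "ennreal C * ennpow (ennreal (1 / m) * I) (1 / r) = ennreal (C * (b / m) powr (1 / r))"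
      using C0 by (simp add: ennreal_mult)
    moreover have "K \<le> C * (b / m) powr (1 / r)"
    proof -
      have "1 \<le> r / (r - 1)" using r by simp
      hence "1 * (lam powr ((r - 1) / r) * (b / m) powr (1 / r))
          \<le> r / (r - 1) * (lam powr ((r - 1) / r) * (b / m) powr (1 / r))"
        by (intro mult_right_mono) auto
      thus ?thesis unfolding K_def C_def by (simp add: mult.assoc)
    qed
    ultimately have Kb: "ennreal K \<le> ennreal C * ennpow (ennreal (1 / m) * I) (1 / r)"
      by (simp add: ennreal_leI)
    have rS: "rearr_loc f Q (lam * m) = Inf S" unfolding rearr_loc_def S_def by simp
    have "ennreal (1 / m) * (\<integral>\<^sup>+ y \<in> Q. ennreal \<bar>f y\<bar> \<partial>lebesgue) \<le> Inf S + ennreal K"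
      by (rule inf_bd)
    also have "\<dots> \<le> ennreal C * ennpow (ennreal (1 / m) * I) (1 / r) + rearr_loc f Q (lam * m)"
      unfolding rS using Kb add_left_mono[OF Kb, of "Inf S"] by (simp only: add.commute)
    finally show ?thesis unfolding I_def C_def .
  qed
qed


theorem proposition2p1:
  fixes f :: "real ^ 'n \<Rightarrow> real" and x :: "real ^ 'n" and r lam :: real
  assumes "r > 1" and "0 < lam" and "lam < 1"
    and "f \<in> borel_measurable lebesgue"
  shows "HL_max f x \<le> ennreal (r / (r - 1) * lam powr ((r - 1) / r)) * HL_max_r r f x
           + loc_max lam f x"
  unfolding HL_max_def[of f x]
proof (rule SUP_least)
  fix Q assume "Q \<in> {Q. is_cube Q \<and> x \<in> Q}"
  then obtain a h where h: "h > 0" and Qd: "Q = cbox a (a + h *\<^sub>R One)" and xQ: "x \<in> Q"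
    unfolding is_cube_def by auto
  define m where "m = measure lebesgue Q"
  have Ql: "Q \<in> lmeasurable" unfolding Qd by (rule lmeasurable_cbox)
  hence Qs: "Q \<in> sets lebesgue" by (rule fmeasurableD)
  have eQ: "emeasure lebesgue Q = ennreal m" unfolding m_def using Ql by (rule emeasure_eq_measure2)
  have "m = measure lborel Q" unfolding m_def Qd
    by (rule measure_completion) simp
  moreover have "0 < measure lborel Q" unfolding Qd
    by (rule content_pos_lt) (use h in \<open>auto simp: inner_add_left\<close>)
  ultimately have m0: "m > 0" by simp
  note cb = cube_bound[OF assms(4) Qs eQ m0 assms(1) assms(2) assms(3)]
  have p: "ennpow (ennreal (1 / m) * (\<integral>\<^sup>+ y \<in> Q. ennreal \<bar>\<bar>f y\<bar> powr r\<bar> \<partial>lebesgue)) (1 / r)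
      \<le> HL_max_r r f x"
    unfolding HL_max_r_def HL_max_def m_def
    by (rule ennpow_mono) (use xQ \<open>Q \<in> {Q. is_cube Q \<and> x \<in> Q}\<close> assms(1) in \<open>auto intro!: SUP_upper2\<close>)
  have l: "rearr_loc f Q (lam * m) \<le> loc_max lam f x"
    unfolding loc_max_def m_def by (rule SUP_upper) (use \<open>Q \<in> {Q. is_cube Q \<and> x \<in> Q}\<close> in auto)
  have "ennreal (1 / m) * (\<integral>\<^sup>+ y \<in> Q. ennreal \<bar>f y\<bar> \<partial>lebesgue)
      \<le> ennreal (r / (r - 1) * lam powr ((r - 1) / r)) * HL_max_r r f x + loc_max lam f x"
    by (rule order_trans[OF cb], intro add_mono mult_left_mono p l) simp
  thus "ennreal (1 / measure lebesgue Q) * (\<integral>\<^sup>+ y \<in> Q. ennreal \<bar>f y\<bar> \<partial>lebesgue)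
      \<le> ennreal (r / (r - 1) * lam powr ((r - 1) / r)) * HL_max_r r f x + loc_max lam f x"
    unfolding m_def .
qed


end
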